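(* Let $m$ be a positive integer, $r$ an odd prime, and $p\ge 3$ a prime which is a primitive root modulo $r^m$. Let $q=p^{\phi(r^m)}$ and $f(x)=\mathrm{Tr}_{q/p}\big(x^{(q-1)/r^m}\big)$ for $x\in\mathbb{F}_q$. Then: (i) the partition $\{D^*_{f,i}\}_{i\in f(\mathbb{F}_q^* )}$ induces a $2$-class association scheme if and only if $|f(\mathbb{F}_q^* )|=2$, and this holds if and only if $m=1$ or $r\equiv 1\pmod p$; (ii) the partition $\{D^*_{f,i}\}_{i\in f(\mathbb{F}_q^* )}$ induces a $3$-class association scheme if and only if $|f(\mathbb{F}_q^* )|=3$, and this holds if and only if $m>1$ and $r\not\equiv 1\pmod p$.
   Context: $\phi$ is Euler's function and $\mathrm{Tr}_{q/p}$ the trace from $\mathbb{F}_q$ to $\mathbb{F}_p$. For $i\in\mathbb{F}_p$, $D_{f,i}=\{x\in\mathbb{F}_q:f(x)=i\}$, $D^*_{f,i}=D_{f,i}\setminus\{0\}$, $f(\mathbb{F}_q^* )=\{f(x):x\ne0\}$. Relations on $\mathbb{F}_q$: the diagonal $R_{-1}$, and for $i\in f(\mathbb{F}_q^* )$, $(\alpha,\beta)\in R_i$ iff $\alpha-\beta\in D^*_{f,i}$. The partition induces a $d$-class association scheme if these relations form a symmetric association scheme on $\mathbb{F}_q$ (each relation symmetric, and for any three relations $R_a,R_b,R_c$ the number $|\{w:(u,w)\in R_a,(w,v)\in R_b\}|$ is constant over $(u,v)\in R_c$) and $d=|f(\mathbb{F}_q^* )|$. *)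

theory Defs
  imports "HOL-Number_Theory.Number_Theory"
begin

text \<open>Trace from F_q to F_p, where q = p^n: Tr(y) = sum_{j<n} y^(p^j).
  Its values lie in the prime subfield, viewed inside the field itself.\<close>
definition field_trace :: "nat \<Rightarrow> nat \<Rightarrow> 'a::field \<Rightarrow> 'a" where
  "field_trace p n y = (\<Sum>j<n. y ^ (p ^ j))"

text \<open>Relations induced by the partition {D*_{f,i}}: None is the diagonal R_{-1},
  Some i is R_i = {(a,b). a - b \<in> D*_{f,i}}.\<close>
definition part_rel :: "('a::ab_group_add \<Rightarrow> 'b) \<Rightarrow> 'b option \<Rightarrow> ('a \<times> 'a) set" where
  "part_rel f c = (case c of None \<Rightarrow> Id
                    | Some i \<Rightarrow> {(a, b). a - b \<noteq> 0 \<and> f (a - b) = i})"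

definition part_index :: "('a::ab_group_add \<Rightarrow> 'b) \<Rightarrow> 'b option set" where
  "part_index f = insert None (Some ` (f ` (UNIV - {0})))"

definition induces_assoc_scheme :: "('a::ab_group_add \<Rightarrow> 'b) \<Rightarrow> nat \<Rightarrow> bool" where
  "induces_assoc_scheme f d \<longleftrightarrow>
     (\<forall>a\<in>part_index f. sym (part_rel f a)) \<and>
     (\<forall>a\<in>part_index f. \<forall>b\<in>part_index f. \<forall>c\<in>part_index f. \<exists>k::nat.
        \<forall>u v. (u, v) \<in> part_rel f c \<longrightarrow>
          card {w. (u, w) \<in> part_rel f a \<and> (w, v) \<in> part_rel f b} = k) \<and>
     d = card (f ` (UNIV - {0}))"

end

theory Submission
  imports Defs "HOL-Computational_Algebra.Polynomial"
begin

lemma fin_card_zero: "of_nat (card (UNIV::'a::{finite,ring_1} set)) = (0::'a)"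
proof -
  have "(\<Sum>x\<in>UNIV. x + 1) = (\<Sum>x\<in>(UNIV::'a set). x)"
    by (rule sum.reindex_bij_witness[of _ "\<lambda>x. x - 1" "\<lambda>x. x+1"]) auto
  then show ?thesis by (simp add: sum.distrib)
qed

lemma char_eq:
  assumes "card (UNIV::'a::{field,finite} set) = p ^ k" "prime p" "k > 0"
  shows "CHAR('a) = p"
proof -
  have "of_nat (p ^ k) = (0::'a)" using fin_card_zero[where 'a='a] assms(1) by simp
  then have "CHAR('a) dvd p ^ k" by (simp only: of_nat_eq_0_iff_char_dvd)
  moreover have "p ^ k > 0" using assms(2) prime_gt_0_nat by simp
  ultimately have "CHAR('a) > 0" by (metis dvd_0_left_iff gr0I less_irrefl)
  then have pc: "prime CHAR('a)" by (rule prime_CHAR_semidom)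
  have "CHAR('a) dvd p" using prime_dvd_power_nat[OF pc \<open>CHAR('a) dvd p ^ k\<close>] .
  then show ?thesis using primes_dvd_imp_eq[OF pc assms(2)] by simp
qed

lemma pow_card: "(x::'a::{field,finite}) ^ card (UNIV :: 'a set) = x"
proof (cases "x = 0")
  case False
  have "x * (\<Prod>y\<in>UNIV-{0}. x * y) = x * x ^ (card (UNIV :: 'a set) - 1) * \<Prod>(UNIV-{0})"
    by (simp add: prod.distrib mult_ac)
  also have "x * x ^ (card (UNIV :: 'a set) - 1) = x ^ Suc (card (UNIV :: 'a set) - 1)"
    by (subst power_Suc) auto
  also have "Suc (card (UNIV :: 'a set) - 1) = card (UNIV :: 'a set)"
    using finite_UNIV_card_ge_0[where ?'a = 'a] by simp
  also have "(\<Prod>y\<in>UNIV-{0}. x * y) = (\<Prod>y\<in>UNIV-{0}. y)"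
    by (rule prod.reindex_bij_witness[of _ "\<lambda>y. y / x" "\<lambda>y. x * y"]) (use False in auto)
  finally show ?thesis
    by simp
qed (use finite_UNIV_card_ge_0[where ?'a = 'a] in auto)

lemma pow_card1: "(x::'a::{field,finite}) \<noteq> 0 \<Longrightarrow> x ^ (card (UNIV :: 'a set) - 1) = 1"
proof -
  assume x: "x \<noteq> 0"
  define c where "c = card (UNIV :: 'a set)"
  have c: "c = Suc (c - 1)" using finite_UNIV_card_ge_0[where ?'a = 'a] unfolding c_def by simp
  have "x * x ^ (c - 1) = x * 1" using pow_card[of x] power_Suc[of x "c - 1"] c unfolding c_def by simp
  then show ?thesis using x unfolding c_def by simp
qed

lemma roots_le: "d > 0 \<Longrightarrow> card {x::'a::field. x ^ d = 1} \<le> d"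
proof -
  assume d: "d > 0"
  let ?p = "monom (1::'a) d + [:-1:]"
  have deg: "degree ?p = d" using d by (subst degree_add_eq_left) (auto simp: degree_monom_eq)
  have "?p \<noteq> 0" using deg d by auto
  then have "card {x. poly ?p x = 0} \<le> d" using card_poly_roots_bound deg by metis
  moreover have "{x. poly ?p x = 0} = {x. x ^ d = 1}" by (auto simp: poly_monom)
  ultimately show ?thesis by simp
qed

lemma card_fibers_le:
  assumes "finite A" "\<And>y. y \<in> h ` A \<Longrightarrow> card {x\<in>A. h x = y} \<le> k"
  shows "card A \<le> card (h ` A) * k"
proof -
  have eq: "(\<Union>y\<in>h ` A. {x\<in>A. h x = y}) = A" by auto
  have "card (\<Union>y\<in>h ` A. {x\<in>A. h x = y}) \<le> (\<Sum>y\<in>h ` A. card {x\<in>A. h x = y})"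
    by (rule card_UN_le) (use assms in auto)
  then have "card A \<le> (\<Sum>y\<in>h ` A. card {x\<in>A. h x = y})" by (subst (asm) eq)
  also have "\<dots> \<le> card (h ` A) * k" using assms(2) sum_bounded_above[of "h ` A" "\<lambda>y. card {x\<in>A. h x = y}" k] by simp
  finally show ?thesis .
qed

lemma roots_eq:
  fixes d :: nat
  assumes "d > 0" "d dvd card (UNIV::'a::{field,finite} set) - 1"
  shows "card {x::'a. x ^ d = 1} = d"
    and "(\<lambda>x::'a. x ^ ((card (UNIV::'a set) - 1) div d)) ` (UNIV - {0}) = {x. x ^ d = 1}"
proof -
  define q where "q = card (UNIV::'a set)"
  have q2: "q \<ge> 2"
  proof -
    have "card {0::'a, 1} \<le> card (UNIV::'a set)" by (rule card_mono) auto
    then show ?thesis by (simp add: q_def)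
  qed
  define e where "e = (q - 1) div d"
  have qe: "q - 1 = d * e" using assms(2) unfolding e_def q_def by simp
  have e0: "e > 0" using qe q2 by (cases e) auto
  let ?h = "\<lambda>x::'a. x ^ e"
  let ?U = "UNIV - {0::'a}"
  have sub: "?h ` ?U \<subseteq> {x. x ^ d = 1}"
  proof
    fix y assume "y \<in> ?h ` ?U"
    then obtain x where "x \<noteq> 0" "y = x ^ e" by auto
    then show "y \<in> {x. x ^ d = 1}" using pow_card1[of x] qe unfolding q_def
      by (simp add: power_mult[symmetric] mult.commute)
  qed
  have fib: "card {x\<in>?U. ?h x = y} \<le> e" if "y \<in> ?h ` ?U" for y
  proof -
    obtain x0 where x0: "x0 \<noteq> 0" "y = x0 ^ e" using \<open>y \<in> ?h ` ?U\<close> by auto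
    have "{x\<in>?U. ?h x = y} \<subseteq> (\<lambda>z. x0 * z) ` {z. z ^ e = 1}"
    proof
      fix x assume "x \<in> {x\<in>?U. ?h x = y}"
      then have "x \<noteq> 0" "x ^ e = x0 ^ e" using x0 by auto
      then have "(x / x0) ^ e = 1" using x0 by (simp add: power_divide)
      moreover have "x = x0 * (x / x0)" using x0 by simp
      ultimately show "x \<in> (\<lambda>z. x0 * z) ` {z. z ^ e = 1}" by blast
    qed
    then have "card {x\<in>?U. ?h x = y} \<le> card ((\<lambda>z. x0 * z) ` {z. z ^ e = 1})"
      by (intro card_mono) auto
    also have "\<dots> \<le> card {z::'a. z ^ e = 1}" by (rule card_image_le) auto
    also have "\<dots> \<le> e" using roots_le e0 by blast
    finally show ?thesis .
  qed
  have "card ?U \<le> card (?h ` ?U) * e" by (rule card_fibers_le) (use fib in auto)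
  moreover have "card ?U = q - 1" unfolding q_def by (simp add: card_Diff_subset)
  ultimately have "d * e \<le> card (?h ` ?U) * e" using qe by simp
  then have "d \<le> card (?h ` ?U)" using e0 by simp
  moreover have "card (?h ` ?U) \<le> card {x::'a. x ^ d = 1}" using sub by (intro card_mono) auto
  moreover have "card {x::'a. x ^ d = 1} \<le> d" using roots_le assms(1) by blast
  ultimately have c1: "card {x::'a. x ^ d = 1} = d" and c2: "card (?h ` ?U) = card {x::'a. x ^ d = 1}" by linarith+
  show "card {x::'a. x ^ d = 1} = d" by (rule c1)
  show "(\<lambda>x::'a. x ^ ((card (UNIV::'a set) - 1) div d)) ` (UNIV - {0}) = {x. x ^ d = 1}"
    using card_subset_eq[OF _ sub c2] unfolding e_def q_def by auto
qed

locale plane =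
  fixes F :: "'a::{field,finite} set" and g :: "'a \<Rightarrow> 'b"
  assumes F0: "0 \<in> F" and F1: "1 \<in> F"
    and Fdiff: "\<And>x y. x \<in> F \<Longrightarrow> y \<in> F \<Longrightarrow> x - y \<in> F"
    and Fmul: "\<And>x y. x \<in> F \<Longrightarrow> y \<in> F \<Longrightarrow> x * y \<in> F"
    and Finv: "\<And>x. x \<in> F \<Longrightarrow> inverse x \<in> F"
    and Fcard: "card F * card F = card (UNIV::'a set)"
    and ginv: "\<And>l x. l \<in> F \<Longrightarrow> l \<noteq> 0 \<Longrightarrow> g (l * x) = g x"
begin

definition line :: "'a \<Rightarrow> 'a set" where "line x = (\<lambda>t. t * x) ` F"

lemma Fdiv: "x \<in> F \<Longrightarrow> y \<in> F \<Longrightarrow> x / y \<in> F"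
  by (simp add: divide_inverse Fmul Finv)

lemma Fneg: "x \<in> F \<Longrightarrow> - x \<in> F"
  using Fdiff[OF F0] by simp

lemma card_line: "x \<noteq> 0 \<Longrightarrow> card (line x) = card F"
  unfolding line_def by (rule card_image) (auto simp: inj_on_def)

lemma in_line: "y \<in> line x \<longleftrightarrow> (\<exists>t\<in>F. y = t * x)"
  unfolding line_def by auto

lemma zero_line: "0 \<in> line x" using F0 by (auto simp: in_line)
lemma self_line: "x \<in> line x" using F1 by (force simp: in_line)

lemma line_sym: "y \<in> line x \<Longrightarrow> y \<noteq> 0 \<Longrightarrow> x \<in> line y"
proof -
  assume "y \<in> line x" "y \<noteq> 0"
  then obtain t where t: "t \<in> F" "y = t * x" by (auto simp: in_line)
  then have "t \<noteq> 0" using \<open>y \<noteq> 0\<close> by auto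
  then have "x = inverse t * y" using t by simp
  then show ?thesis using Finv t by (auto simp: in_line)
qed

lemma line_trans: "y \<in> line x \<Longrightarrow> z \<in> line y \<Longrightarrow> z \<in> line x"
  unfolding in_line by (metis Fmul mult.assoc)

lemma g_line: "y \<in> line x \<Longrightarrow> y \<noteq> 0 \<Longrightarrow> g y = g x"
  unfolding in_line using ginv by fastforce

lemma line_diff: "y \<in> line x \<Longrightarrow> z \<in> line x \<Longrightarrow> y - z \<in> line x"
  unfolding in_line by (metis Fdiff left_diff_distrib)

lemma line_add: "y \<in> line x \<Longrightarrow> z \<in> line x \<Longrightarrow> y + z \<in> line x"
  using line_diff[of y x "- z"] line_diff[OF zero_line[of x], of z] by simp

lemma line_scale: "y \<in> line x \<Longrightarrow> t \<in> F \<Longrightarrow> t * y \<in> line x"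
  unfolding in_line by (metis Fmul mult.assoc)

lemma span_inj:
  assumes "x \<noteq> 0" "y \<notin> line x" "a \<in> F" "b \<in> F" "a' \<in> F" "b' \<in> F"
    and "a * x + b * y = a' * x + b' * y"
  shows "a = a' \<and> b = b'"
proof -
  have "b = b'"
  proof (rule ccontr)
    assume "b \<noteq> b'"
    have "(b - b') * y = (a' - a) * x" using assms(7) by (simp add: algebra_simps)
    then have "y = ((a' - a) / (b - b')) * x" using \<open>b \<noteq> b'\<close>
      by (simp add: field_simps)
    moreover have "(a' - a) / (b - b') \<in> F" using assms by (intro Fdiv Fdiff)
    ultimately show False using assms(2) by (auto simp: in_line)
  qed
  then show ?thesis using assms by auto
qed

lemma span:
  assumes "x \<noteq> 0" "y \<notin> line x"
  shows "\<exists>a\<in>F. \<exists>b\<in>F. z = a * x + b * y"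
proof -
  let ?h = "\<lambda>(a, b). a * x + b * y"
  have "inj_on ?h (F \<times> F)" using span_inj[OF assms] by (auto simp: inj_on_def)
  then have "card (?h ` (F \<times> F)) = card (UNIV::'a set)"
    by (simp add: card_image card_cartesian_product Fcard)
  then have "?h ` (F \<times> F) = UNIV" by (simp add: card_subset_eq)
  then have "z \<in> ?h ` (F \<times> F)" by simp
  then show ?thesis by auto
qed

definition D :: "'b \<Rightarrow> 'a set" where "D z = {x. x \<noteq> 0 \<and> g x = z}"

definition T :: "'b \<Rightarrow> 'b \<Rightarrow> 'a \<Rightarrow> 'a set" where
  "T a b u = {w. w \<noteq> 0 \<and> u - w \<noteq> 0 \<and> g (u - w) = a \<and> g w = b}"

lemma Q2: "card F \<ge> 2"
proof -
  have "card {0::'a, 1} \<le> card (UNIV::'a set)" by (rule card_mono) auto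
  then have "2 \<le> card F * card F" using Fcard by simp
  show ?thesis
  proof (rule ccontr)
    assume "\<not> 2 \<le> card F"
    then have "card F \<le> 1" by simp
    then have "card F * card F \<le> 1 * 1" by (intro mult_le_mono) auto
    then show False using \<open>2 \<le> card F * card F\<close> by simp
  qed
qed

lemma T_line:
  assumes "u \<noteq> 0"
  shows "T a b u \<inter> line u = (if g u = a \<and> g u = b then line u - {0, u} else {})"
proof -
  have "w \<in> T a b u" if "w \<in> line u" "w \<noteq> 0" "w \<noteq> u" "g u = a" "g u = b" for w
  proof -
    have "u - w \<in> line u" using line_diff[OF self_line that(1)] .
    then show ?thesis using that g_line unfolding T_def by auto
  qed
  moreover have "g u = a \<and> g u = b" if "w \<in> line u" "w \<in> T a b u" for w
  proof -
    have "u - w \<in> line u" using line_diff[OF self_line that(1)] .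
    then show ?thesis using that g_line unfolding T_def by auto
  qed
  moreover have "w \<noteq> 0 \<and> w \<noteq> u" if "w \<in> T a b u" for w using that unfolding T_def by auto
  ultimately show ?thesis by auto
qed

lemma card_T_line:
  assumes "u \<noteq> 0"
  shows "card (T a b u \<inter> line u) = (if g u = a \<and> g u = b then card F - 2 else 0)"
proof -
  have "card (line u - {0, u}) = card F - 2"
    using card_line[OF assms] zero_line self_line assms by (subst card_Diff_subset) auto
  then show ?thesis using T_line[OF assms, of a b]
    by (cases "g u = a \<and> g u = b") auto
qed

end

lemma inv_cancel [simp]: "(l::'a::field) \<noteq> 0 \<Longrightarrow> inverse l * (l * w) = w"
  by (simp add: mult.assoc[symmetric])

context plane begin

lemma bij_T:
  assumes u: "u \<noteq> 0"
  shows "bij_betw (\<lambda>(w, l, m). (l * w, m * (u - w)))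
           ((T a b u - line u) \<times> ((F - {0}) \<times> (F - {0})))
           {(x, y). x \<in> D b - line u \<and> y \<in> D a - line u \<and> y \<notin> line x}"
proof -
  have mem: "l * w \<in> D b - line u \<and> m * (u - w) \<in> D a - line u \<and> m * (u - w) \<notin> line (l * w)"
    if w: "w \<in> T a b u" "w \<notin> line u" and l: "l \<in> F" "l \<noteq> 0" and m: "m \<in> F" "m \<noteq> 0" for w l m
  proof -
    have w0: "w \<noteq> 0" "u - w \<noteq> 0" "g (u - w) = a" "g w = b" using w unfolding T_def by auto
    have x1: "l * w \<in> D b" using w0 l ginv unfolding D_def by auto
    have x2: "l * w \<notin> line u"
    proof
      assume "l * w \<in> line u"
      then have "inverse l * (l * w) \<in> line u" using line_scale Finv l by blast
      then show False using w l by simp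
    qed
    have y1: "m * (u - w) \<in> D a" using w0 m ginv unfolding D_def by auto
    have y2: "m * (u - w) \<notin> line u"
    proof
      assume "m * (u - w) \<in> line u"
      then have "inverse m * (m * (u - w)) \<in> line u" using line_scale Finv m by blast
      then have "u - w \<in> line u" using m by simp
      then have "u - (u - w) \<in> line u" using line_diff self_line by blast
      then show False using w by simp
    qed
    have y3: "m * (u - w) \<notin> line (l * w)"
    proof
      assume "m * (u - w) \<in> line (l * w)"
      then have "inverse m * (m * (u - w)) \<in> line (l * w)" using line_scale Finv m by blast
      then have a1: "u - w \<in> line (l * w)" using m by simp
      have "inverse l * (l * w) \<in> line (l * w)" using line_scale Finv l self_line by blast
      then have a2: "w \<in> line (l * w)" using l by simp
      have "(u - w) + w \<in> line (l * w)" using line_add a1 a2 by blast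
      then have "l * w \<in> line u" using line_sym u by simp
      then show False using x2 by simp
    qed
    show ?thesis using x1 x2 y1 y2 y3 by simp
  qed
  show ?thesis unfolding bij_betw_def
  proof (intro conjI)
    show "inj_on (\<lambda>(w, l, m). (l * w, m * (u - w))) ((T a b u - line u) \<times> ((F - {0}) \<times> (F - {0})))"
    proof (rule inj_onI)
      fix s t assume s: "s \<in> (T a b u - line u) \<times> ((F - {0}) \<times> (F - {0}))"
        and t: "t \<in> (T a b u - line u) \<times> ((F - {0}) \<times> (F - {0}))"
        and st: "(\<lambda>(w, l, m). (l * w, m * (u - w))) s = (\<lambda>(w, l, m). (l * w, m * (u - w))) t"
      obtain w l m where sw: "s = (w, l, m)" by (cases s) auto
      obtain w' l' m' where tw: "t = (w', l', m')" by (cases t) auto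
      have A: "w \<in> T a b u" "w \<notin> line u" "l \<in> F" "l \<noteq> 0" "m \<in> F" "m \<noteq> 0"
        "w' \<in> T a b u" "w' \<notin> line u" "l' \<in> F" "l' \<noteq> 0" "m' \<in> F" "m' \<noteq> 0"
        using s t sw tw by auto
      have e1: "l * w = l' * w'" and e2: "m * (u - w) = m' * (u - w')" using st sw tw by auto

      have M: "l * w \<in> D b - line u \<and> m * (u - w) \<in> D a - line u \<and> m * (u - w) \<notin> line (l * w)"
        using mem A by blast
      have x0: "l * w \<noteq> 0" using M unfolding D_def by auto
      have s1: "inverse l * (l * w) + inverse m * (m * (u - w)) = u" using A by simp
      have s2: "inverse l' * (l * w) + inverse m' * (m * (u - w)) = u" using A by (simp only: e1 e2 inv_cancel) simp
      have "inverse l * (l * w) + inverse m * (m * (u - w)) = inverse l' * (l * w) + inverse m' * (m * (u - w))"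
        using s1 s2 by simp
      then have "inverse l = inverse l' \<and> inverse m = inverse m'"
        using span_inj[OF x0 _ _ _ _ _, of "m * (u - w)" "inverse l" "inverse m" "inverse l'" "inverse m'"]
          M A Finv by blast
      then have "l = l'" "m = m'" by auto
      then show "s = t" using e1 A sw tw by simp
    qed
    show "(\<lambda>(w, l, m). (l * w, m * (u - w))) ` ((T a b u - line u) \<times> ((F - {0}) \<times> (F - {0})))
       = {(x, y). x \<in> D b - line u \<and> y \<in> D a - line u \<and> y \<notin> line x}"
    proof (intro equalityI subsetI)
      fix z assume "z \<in> (\<lambda>(w, l, m). (l * w, m * (u - w))) ` ((T a b u - line u) \<times> ((F - {0}) \<times> (F - {0})))"
      then show "z \<in> {(x, y). x \<in> D b - line u \<and> y \<in> D a - line u \<and> y \<notin> line x}"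
        using mem by auto
    next
      fix z assume "z \<in> {(x, y). x \<in> D b - line u \<and> y \<in> D a - line u \<and> y \<notin> line x}"
      then obtain x y where z: "z = (x, y)" and xy: "x \<in> D b" "x \<notin> line u" "y \<in> D a" "y \<notin> line u" "y \<notin> line x"
        by auto
      have x0: "x \<noteq> 0" "g x = b" and y0: "y \<noteq> 0" "g y = a" using xy unfolding D_def by auto
      obtain \<alpha> \<beta> where ab: "\<alpha> \<in> F" "\<beta> \<in> F" "u = \<alpha> * x + \<beta> * y" using span[OF x0(1) xy(5)] by blast
      have a0: "\<alpha> \<noteq> 0"
      proof
        assume "\<alpha> = 0"
        then have "u \<in> line y" using ab by (auto simp: in_line)
        then have "y \<in> line u" using line_sym u by blast
        then show False using xy by simp
      qed
      have b0: "\<beta> \<noteq> 0"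
      proof
        assume "\<beta> = 0"
        then have "u \<in> line x" using ab by (auto simp: in_line)
        then have "x \<in> line u" using line_sym u by blast
        then show False using xy by simp
      qed
      define w where "w = \<alpha> * x"
      have uw: "u - w = \<beta> * y" using ab unfolding w_def by simp
      have wT: "w \<in> T a b u" unfolding T_def w_def
        using uw[unfolded w_def] x0 y0 a0 b0 ginv ab by auto
      have wl: "w \<notin> line u"
      proof
        assume "w \<in> line u"
        then have "inverse \<alpha> * w \<in> line u" using line_scale Finv ab by blast
        then show False using a0 xy unfolding w_def by simp
      qed
      have "z = (\<lambda>(w, l, m). (l * w, m * (u - w))) (w, inverse \<alpha>, inverse \<beta>)"
        using z uw a0 b0 unfolding w_def by simp
      moreover have "(w, inverse \<alpha>, inverse \<beta>) \<in> (T a b u - line u) \<times> ((F - {0}) \<times> (F - {0}))"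
        using wT wl Finv ab a0 b0 by auto
      ultimately show "z \<in> (\<lambda>(w, l, m). (l * w, m * (u - w))) ` ((T a b u - line u) \<times> ((F - {0}) \<times> (F - {0})))"
        by blast
    qed
  qed
qed

end

context plane begin

lemma card_line0: "x \<noteq> 0 \<Longrightarrow> card (line x - {0}) = card F - 1"
  using card_line zero_line by (simp add: card_Diff_subset)

lemma DL_int: "u \<noteq> 0 \<Longrightarrow> D z \<inter> line u = (if g u = z then line u - {0} else {})"
  unfolding D_def using g_line zero_line by auto

lemma card_DL: "u \<noteq> 0 \<Longrightarrow> card (D z - line u) = card (D z) - (if g u = z then card F - 1 else 0)"
proof -
  assume u: "u \<noteq> 0"
  have c: "card (D z - line u) = card (D z) - card (D z \<inter> line u)"
    by (rule card_Diff_subset_Int) simp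
  show ?thesis
  proof (cases "g u = z")
    case True
    then show ?thesis using c DL_int[OF u, of z] card_line0[OF u] by simp
  next
    case False
    then show ?thesis using c DL_int[OF u, of z] by simp
  qed
qed

lemma Y_line:
  assumes u: "u \<noteq> 0" and x: "x \<in> D b - line u"
  shows "(D a - line u) \<inter> line x = (if a = b then line x - {0} else {})"
proof -
  have x0: "x \<noteq> 0" "g x = b" "x \<notin> line u" using x unfolding D_def by auto
  have h1: "z \<in> D a - line u" if "a = b" "z \<in> line x" "z \<noteq> 0" for z
  proof -
    have "g z = a" using g_line that x0 by auto
    moreover have "z \<notin> line u"
    proof
      assume "z \<in> line u"
      moreover have "x \<in> line z" using line_sym that by blast
      ultimately have "x \<in> line u" using line_trans by blast
      then show False using x0 by simp
    qed
    ultimately show ?thesis using that unfolding D_def by auto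
  qed
  have h2: "a = b" if "z \<in> D a" "z \<in> line x" for z
    using that g_line x0 unfolding D_def by auto
  have h3: "z \<noteq> 0" if "z \<in> D a" for z using that unfolding D_def by auto
  show ?thesis
  proof (cases "a = b")
    case True
    have "(D a - line u) \<inter> line x = line x - {0}"
    proof (intro equalityI subsetI)
      fix z assume "z \<in> (D a - line u) \<inter> line x" then show "z \<in> line x - {0}" using h3 by blast
    next
      fix z assume "z \<in> line x - {0}" then show "z \<in> (D a - line u) \<inter> line x" using h1 True by blast
    qed
    then show ?thesis using True by simp
  next
    case False
    have "(D a - line u) \<inter> line x = {}" using h2 False by blast
    then show ?thesis using False by simp
  qed
qed

lemma card_P:
  assumes u: "u \<noteq> 0"
  shows "card {(x, y). x \<in> D b - line u \<and> y \<in> D a - line u \<and> y \<notin> line x}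
       = card (D b - line u) * (card (D a - line u) - (if a = b then card F - 1 else 0))"
proof -
  have "{(x, y). x \<in> D b - line u \<and> y \<in> D a - line u \<and> y \<notin> line x}
      = Sigma (D b - line u) (\<lambda>x. (D a - line u) - line x)" by auto
  then have "card {(x, y). x \<in> D b - line u \<and> y \<in> D a - line u \<and> y \<notin> line x}
      = (\<Sum>x\<in>D b - line u. card ((D a - line u) - line x))"
    by (simp add: card_SigmaI)
  also have "\<dots> = (\<Sum>x\<in>D b - line u. card (D a - line u) - (if a = b then card F - 1 else 0))"
  proof (rule sum.cong)
    fix x assume x: "x \<in> D b - line u"
    have x0: "x \<noteq> 0" using x unfolding D_def by auto
    show "card ((D a - line u) - line x) = card (D a - line u) - (if a = b then card F - 1 else 0)"
    proof -
      have c: "card ((D a - line u) - line x) = card (D a - line u) - card ((D a - line u) \<inter> line x)"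
        by (rule card_Diff_subset_Int) simp
      show ?thesis
      proof (cases "a = b")
        case True
        then show ?thesis using c Y_line[OF u x, of a] card_line0[OF x0] by simp
      next
        case False
        then show ?thesis using c Y_line[OF u x, of a] by simp
      qed
    qed
  qed simp
  finally show ?thesis by simp
qed

lemma card_T_eq:
  assumes u: "u \<noteq> 0" and u': "u' \<noteq> 0" and guu: "g u = g u'"
  shows "card (T a b u) = card (T a b u')"
proof -
  have split: "card (T a b v) = card (T a b v \<inter> line v) + card (T a b v - line v)" for v
  proof -
    have "T a b v = (T a b v \<inter> line v) \<union> (T a b v - line v)" by auto
    then have "card (T a b v) = card ((T a b v \<inter> line v) \<union> (T a b v - line v))" by simp
    also have "\<dots> = card (T a b v \<inter> line v) + card (T a b v - line v)"
      by (rule card_Un_disjoint) auto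
    finally show ?thesis .
  qed
  have main: "card (T a b v - line v) * ((card F - 1) * (card F - 1))
     = card (D b - line v) * (card (D a - line v) - (if a = b then card F - 1 else 0))" if v: "v \<noteq> 0" for v
  proof -
    have "card ((T a b v - line v) \<times> ((F - {0}) \<times> (F - {0})))
        = card {(x, y). x \<in> D b - line v \<and> y \<in> D a - line v \<and> y \<notin> line x}"
      by (rule bij_betw_same_card[OF bij_T[OF v]])
    moreover have "card (F - {0}) = card F - 1" using F0 by (simp add: card_Diff_subset)
    ultimately show ?thesis using card_P[OF v] by (simp add: card_cartesian_product)
  qed
  have pos: "(card F - 1) * (card F - 1) > 0" using Q2 by simp
  have "card (T a b u - line u) * ((card F - 1) * (card F - 1))
      = card (T a b u' - line u') * ((card F - 1) * (card F - 1))"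
    using main[OF u] main[OF u'] card_DL[OF u] card_DL[OF u'] guu by simp
  then have "card (T a b u - line u) = card (T a b u' - line u')" using pos by simp
  then show ?thesis using split[of u] split[of u'] card_T_line[OF u] card_T_line[OF u'] guu by simp
qed

end

context plane begin

lemma g_neg: "g (- x) = g x"
proof -
  have "-1 \<in> F" "(-1::'a) \<noteq> 0" using Fneg[OF F1] by auto
  then show ?thesis using ginv[of "-1" x] by simp
qed

lemma rel_unique:
  assumes "(u, v) \<in> part_rel g c"
  shows "(u, v) \<in> part_rel g b \<longleftrightarrow> b = c"
  using assms unfolding part_rel_def by (cases b; cases c) auto

lemma T_transl:
  "{w. (u, w) \<in> part_rel g (Some a) \<and> (w, v) \<in> part_rel g (Some b)} = (\<lambda>w. w + v) ` T a b (u - v)"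
proof (intro equalityI subsetI)
  fix w assume "w \<in> {w. (u, w) \<in> part_rel g (Some a) \<and> (w, v) \<in> part_rel g (Some b)}"
  then have "w - v \<in> T a b (u - v)" unfolding part_rel_def T_def by (simp add: algebra_simps)
  then show "w \<in> (\<lambda>w. w + v) ` T a b (u - v)" by (rule rev_image_eqI) simp
next
  fix w assume "w \<in> (\<lambda>w. w + v) ` T a b (u - v)"
  then obtain w' where "w' \<in> T a b (u - v)" "w = w' + v" by auto
  then show "w \<in> {w. (u, w) \<in> part_rel g (Some a) \<and> (w, v) \<in> part_rel g (Some b)}"
    unfolding part_rel_def T_def by (simp add: algebra_simps)
qed

lemma card_transl:
  "card {w. (u, w) \<in> part_rel g (Some a) \<and> (w, v) \<in> part_rel g (Some b)} = card (T a b (u - v))"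
  unfolding T_transl by (rule card_image) (simp add: inj_on_def)

lemma scheme:
  "(\<forall>a. sym (part_rel g a)) \<and>
   (\<forall>a b c. \<exists>k::nat. \<forall>u v. (u, v) \<in> part_rel g c \<longrightarrow>
          card {w. (u, w) \<in> part_rel g a \<and> (w, v) \<in> part_rel g b} = k)"
proof (intro conjI allI)
  fix a
  show "sym (part_rel g a)"
  proof (cases a)
    case None then show ?thesis by (simp add: part_rel_def sym_Id)
  next
    case (Some i)
    have "g (y - x) = g (x - y)" for x y using g_neg[of "x - y"] by simp
    then show ?thesis unfolding Some part_rel_def by (auto intro!: symI)
  qed
next
  fix a b c
  show "\<exists>k::nat. \<forall>u v. (u, v) \<in> part_rel g c \<longrightarrow>
          card {w. (u, w) \<in> part_rel g a \<and> (w, v) \<in> part_rel g b} = k"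
  proof (cases a)
    case None
    have "card {w. (u, w) \<in> part_rel g a \<and> (w, v) \<in> part_rel g b} = (if b = c then 1 else 0)"
      if "(u, v) \<in> part_rel g c" for u v
    proof -
      have "{w. (u, w) \<in> part_rel g a \<and> (w, v) \<in> part_rel g b} = (if b = c then {u} else {})"
        using rel_unique[OF that, of b] None by (auto simp: part_rel_def)
      then show ?thesis by simp
    qed
    then show ?thesis by blast
  next
    case (Some \<alpha>)
    show ?thesis
    proof (cases b)
      case None
      have "card {w. (u, w) \<in> part_rel g a \<and> (w, v) \<in> part_rel g b} = (if a = c then 1 else 0)"
        if "(u, v) \<in> part_rel g c" for u v
      proof -
        have "{w. (u, w) \<in> part_rel g a \<and> (w, v) \<in> part_rel g b} = (if a = c then {v} else {})"
          using rel_unique[OF that, of a] None by (auto simp: part_rel_def)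
        then show ?thesis by simp
      qed
      then show ?thesis by blast
    next
      case (Some \<beta>)
      show ?thesis
      proof (cases c)
        case None
        have "card {w. (u, w) \<in> part_rel g a \<and> (w, v) \<in> part_rel g b} = card (T \<alpha> \<beta> 0)"
          if "(u, v) \<in> part_rel g c" for u v
          using that None \<open>a = Some \<alpha>\<close> \<open>b = Some \<beta>\<close> card_transl[of u \<alpha> v \<beta>]
          by (simp add: part_rel_def)
        then show ?thesis by blast
      next
        case (Some \<gamma>)
        define x0 where "x0 = (SOME x. x \<noteq> 0 \<and> g x = \<gamma>)"
        have "card {w. (u, w) \<in> part_rel g a \<and> (w, v) \<in> part_rel g b} = card (T \<alpha> \<beta> x0)"
          if "(u, v) \<in> part_rel g c" for u v
        proof -
          have uv: "u - v \<noteq> 0" "g (u - v) = \<gamma>" using that Some by (auto simp: part_rel_def)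
          then have "\<exists>x. x \<noteq> 0 \<and> g x = \<gamma>" by blast
          then have x0: "x0 \<noteq> 0 \<and> g x0 = \<gamma>" unfolding x0_def by (rule someI_ex)
          have "card (T \<alpha> \<beta> (u - v)) = card (T \<alpha> \<beta> x0)"
            by (rule card_T_eq) (use uv x0 in auto)
          then show ?thesis using card_transl[of u \<alpha> v \<beta>] \<open>a = Some \<alpha>\<close> \<open>b = Some \<beta>\<close> by simp
        qed
        then show ?thesis by blast
      qed
    qed
  qed
qed

lemma induces_iff: "induces_assoc_scheme g d \<longleftrightarrow> d = card (g ` (UNIV - {0}))"
  using scheme unfolding induces_assoc_scheme_def by blast

end

lemma geo_sum:
  fixes z :: "'a::field"
  assumes "z ^ M = 1"
  shows "(\<Sum>t\<in>{1..M}. z ^ t) = (if z = 1 then of_nat M else 0)"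
proof -
  have "{1..M} = Suc ` {..<M}" by (auto simp: image_iff) (metis Suc_pred' lessThan_iff le_simps(3) less_eq_Suc_le not_less_eq_eq)
  then have "(\<Sum>t\<in>{1..M}. z ^ t) = (\<Sum>t<M. z ^ Suc t)" by (simp add: sum.reindex)
  also have "\<dots> = z * (\<Sum>t<M. z ^ t)" by (simp add: sum_distrib_left)
  also have "(\<Sum>t<M. z ^ t) = (if z = 1 then of_nat M else 0)"
    using assms by (simp add: sum_gp_strict)
  finally show ?thesis by simp
qed

lemma pow_mod_eq:
  fixes z :: "'a::field"
  assumes "z ^ M = 1"
  shows "z ^ k = z ^ (k mod M)"
proof -
  have "z ^ k = z ^ (M * (k div M) + k mod M)" by simp
  also have "\<dots> = (z ^ M) ^ (k div M) * z ^ (k mod M)" by (simp only: power_add power_mult)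
  finally show ?thesis using assms by simp
qed

lemma coprime_prime_iff: "prime (r::nat) \<Longrightarrow> coprime k r \<longleftrightarrow> \<not> r dvd k"
proof -
  assume r: "prime r"
  show ?thesis
  proof
    assume c: "coprime k r"
    show "\<not> r dvd k"
    proof
      assume "r dvd k"
      then have "is_unit r" using coprime_common_divisor[OF c] by auto
      then show False using r by simp
    qed
  next
    assume "\<not> r dvd k"
    then show "coprime k r" using prime_imp_coprime[OF r] coprime_commute by blast
  qed
qed

lemma trace_formula:
  fixes z :: "'a::field"
  assumes r: "prime r" and m: "m > 0" and prim: "residue_primroot (r ^ m) p" and z: "z ^ (r ^ m) = 1"
  shows "(\<Sum>j<totient (r ^ m). z ^ (p ^ j)) =
         of_nat (if z = 1 then r ^ m else 0) - of_nat (if z ^ r = 1 then r ^ (m - 1) else 0)"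
proof -
  define N where "N = r ^ m"
  have r1: "r > 1" using r prime_gt_1_nat by blast
  have N1: "N > 1" unfolding N_def using one_less_power[OF r1 m] .
  have Nr: "N = r * r ^ (m - 1)" unfolding N_def using m by (cases m) auto
  have "(\<Sum>j<totient N. z ^ (p ^ j)) = (\<Sum>j<totient N. z ^ (p ^ j mod N))"
    using pow_mod_eq[of z N] z unfolding N_def by simp
  also have "\<dots> = (\<Sum>t\<in>totatives N. z ^ t)"
    by (rule sum.reindex_bij_betw[OF residue_primroot_is_generator[OF N1 prim[folded N_def]]])
  also have "totatives N = {1..N} - (\<lambda>s. r * s) ` {1..r ^ (m - 1)}"
  proof (intro equalityI subsetI)
    fix k assume "k \<in> totatives N"
    then have k: "k > 0" "k \<le> N" "coprime k N" by (auto simp: in_totatives_iff)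
    then have "\<not> r dvd k" using coprime_prime_iff[OF r] m unfolding N_def by simp
    then show "k \<in> {1..N} - (\<lambda>s. r * s) ` {1..r ^ (m - 1)}" using k by auto
  next
    fix k assume k: "k \<in> {1..N} - (\<lambda>s. r * s) ` {1..r ^ (m - 1)}"
    have "\<not> r dvd k"
    proof
      assume "r dvd k"
      then obtain s where s: "k = r * s" by auto
      then have "s \<ge> 1" "s \<le> r ^ (m - 1)" using k Nr r1 by auto
      then show False using k s by auto
    qed
    then have "coprime k N" using coprime_prime_iff[OF r] m unfolding N_def by simp
    then show "k \<in> totatives N" using k by (auto simp: in_totatives_iff)
  qed
  also have "(\<Sum>t\<in>{1..N} - (\<lambda>s. r * s) ` {1..r ^ (m - 1)}. z ^ t)
      = (\<Sum>t\<in>{1..N}. z ^ t) - (\<Sum>t\<in>(\<lambda>s. r * s) ` {1..r ^ (m - 1)}. z ^ t)"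
    by (rule sum_diff) (use Nr r1 in auto)
  also have "(\<Sum>t\<in>(\<lambda>s. r * s) ` {1..r ^ (m - 1)}. z ^ t) = (\<Sum>s\<in>{1..r ^ (m - 1)}. (z ^ r) ^ s)"
    using r1 by (subst sum.reindex) (auto simp: inj_on_def power_mult)
  also have "\<dots> = (if z ^ r = 1 then of_nat (r ^ (m - 1)) else 0)"
    by (rule geo_sum) (use z Nr in \<open>simp add: N_def power_mult[symmetric]\<close>)
  also have "(\<Sum>t\<in>{1..N}. z ^ t) = (if z = 1 then of_nat N else 0)"
    by (rule geo_sum) (use z N_def in simp)
  finally show ?thesis unfolding N_def by simp
qed

theorem proposition4p6:
  fixes m r p :: nat
    and f :: "'a::{field,finite} \<Rightarrow> 'a"
  assumes "m > 0" and "prime r" and "odd r"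
    and "prime p" and "p \<ge> 3"
    and "residue_primroot (r ^ m) p"
    and "card (UNIV :: 'a set) = p ^ totient (r ^ m)"
    and "\<And>x. f x = field_trace p (totient (r ^ m)) (x ^ ((card (UNIV :: 'a set) - 1) div r ^ m))"
  shows "(induces_assoc_scheme f 2 \<longleftrightarrow> card (f ` (UNIV - {0})) = 2) \<and>
         (card (f ` (UNIV - {0})) = 2 \<longleftrightarrow> m = 1 \<or> [r = 1] (mod p)) \<and>
         (induces_assoc_scheme f 3 \<longleftrightarrow> card (f ` (UNIV - {0})) = 3) \<and>
         (card (f ` (UNIV - {0})) = 3 \<longleftrightarrow> m > 1 \<and> \<not> [r = 1] (mod p))"
proof -
  note m0 = assms(1) and rp = assms(2) and rodd = assms(3) and pp = assms(4) and p3 = assms(5)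
    and prim = assms(6)
  define N where "N = r ^ m"
  define n where "n = totient N"
  define q where "q = card (UNIV :: 'a set)"
  have fdef: "f x = field_trace p n (x ^ ((q - 1) div N))" for x
    using assms(8) unfolding n_def N_def q_def by simp
  have r1: "r > 1" using rp prime_gt_1_nat by blast
  have r3: "r \<ge> 3"
  proof -
    have "r \<noteq> 2" using rodd by auto
    then show ?thesis using r1 by linarith
  qed
  have N1: "N > 1" unfolding N_def using one_less_power[OF r1 m0] .
  have Nr: "N = r * r ^ (m - 1)" unfolding N_def using m0 by (cases m) auto
  have copN: "coprime N p" and ordN: "ord N p = n"
    using prim unfolding residue_primroot_def N_def n_def by auto
  have n_eq: "n = r ^ (m - 1) * (r - 1)" unfolding n_def N_def using totient_prime_power[OF rp m0] .
  have n0: "n > 0" using n_eq r1 by simp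
  have q_eq: "q = p ^ n" using assms(7) unfolding q_def n_def N_def .
  have pn: "[p ^ n = 1] (mod N)" using ord_works[of p N] ordN by simp
  have p1: "p > 1" using pp prime_gt_1_nat by blast
  have pn1: "p ^ n \<ge> 1" using p1 by simp
  have Ndvd: "N dvd q - 1" using pn cong_altdef_nat[OF pn1] q_eq by simp
  have CH: "CHAR('a) = p" using char_eq[of p n] q_eq pp n0 unfolding q_def by simp
  have pc: "prime CHAR('a)" using CH pp by simp
  obtain k where rk: "r = 2 * k + 1" using rodd oddE by blast
  define s where "s = r ^ (m - 1) * k"
  have ns: "n = 2 * s" unfolding s_def n_eq rk by simp
  have s0: "s > 0" using ns n0 by simp
  define Q where "Q = p ^ s"
  have qQ: "q = Q * Q" unfolding q_eq Q_def ns by (simp add: power_mult power2_eq_square mult.commute)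
  have Q1: "Q > 1" unfolding Q_def using one_less_power[OF p1 s0] .
  have QQ: "(Q - 1) * (Q + 1) = q - 1" unfolding qQ using Q1 by (cases Q) (auto simp: algebra_simps)
  have NQ: "N dvd Q + 1"
  proof -
    have d: "N dvd (Q - 1) * (Q + 1)" using Ndvd QQ by simp
    have "\<not> r dvd Q - 1 \<or> \<not> r dvd Q + 1"
    proof (rule ccontr)
      assume "\<not> (\<not> r dvd Q - 1 \<or> \<not> r dvd Q + 1)"
      then have "r dvd (Q + 1) - (Q - 1)" using dvd_diff_nat by blast
      moreover have "(Q + 1) - (Q - 1) = 2" using Q1 by simp
      ultimately have "r dvd 2" by simp
      then show False using r3 by (auto dest: dvd_imp_le)
    qed
    then show ?thesis
    proof
      assume "\<not> r dvd Q - 1"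
      then have "coprime (Q - 1) N" unfolding N_def using prime_imp_power_coprime[OF rp] by blast
      then have "coprime N (Q - 1)" by (simp add: coprime_commute)
      then show ?thesis using d coprime_dvd_mult_right_iff[of N "Q - 1" "Q + 1"] by blast
    next
      assume "\<not> r dvd Q + 1"
      then have "coprime (Q + 1) N" unfolding N_def using prime_imp_power_coprime[OF rp] by blast
      then have "coprime N (Q + 1)" by (simp add: coprime_commute)
      then have "N dvd Q - 1" using d coprime_dvd_mult_left_iff[of N "Q + 1" "Q - 1"] by blast
      then have "[p ^ s = 1] (mod N)" unfolding Q_def using cong_altdef_nat[of 1 "p ^ s" N] p1 by simp
      then have "n dvd s" using ord_divides ordN by metis
      then have "n \<le> s" using s0 by (simp add: dvd_imp_le)
      then show ?thesis using ns s0 by simp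
    qed
  qed
  define e where "e = (q - 1) div N"
  obtain c where c: "Q + 1 = N * c" using NQ by blast
  have "q - 1 = (Q - 1) * (N * c)" using QQ unfolding c by simp
  then have "q - 1 = N * ((Q - 1) * c)" by (simp only: mult.left_commute)
  then have e_eq: "e = (Q - 1) * c" unfolding e_def using N1 by simp
  have frob: "(x + y) ^ Q = x ^ Q + y ^ Q" for x y :: 'a
    using freshmans_dream'[OF pc, of Q s] CH unfolding Q_def by simp
  define F where "F = {x::'a. x ^ Q = x}"
  have memF: "x \<in> F \<longleftrightarrow> x = 0 \<or> x ^ (Q - 1) = 1" for x :: 'a
  proof -
    have "x ^ Q = x * x ^ (Q - 1)" using Q1 by (metis Suc_diff_1 less_trans zero_less_one power_Suc)
    then show ?thesis unfolding F_def by auto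
  qed
  have Fcard: "card F = Q"
  proof -
    have "F = insert 0 {x::'a. x ^ (Q - 1) = 1}" using memF by auto
    moreover have "(0::'a) \<notin> {x::'a. x ^ (Q - 1) = 1}" using Q1 by (simp add: power_0_left)
    moreover have "card {x::'a. x ^ (Q - 1) = 1} = Q - 1"
    proof (rule roots_eq(1))
      show "Q - 1 > 0" using Q1 by simp
      have "Q - 1 dvd (Q - 1) * (Q + 1)" by simp
      then show "Q - 1 dvd card (UNIV::'a set) - 1" unfolding QQ q_def .
    qed
    ultimately show ?thesis using Q1 by simp
  qed
  have pl: "plane F f"
  proof
    show "0 \<in> F" using Q1 unfolding F_def by simp
    show "1 \<in> F" unfolding F_def by simp
    show "x - y \<in> F" if "x \<in> F" "y \<in> F" for x y
    proof -
      have "x ^ Q = (x - y) ^ Q + y ^ Q" using frob[of "x - y" y] by simp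
      then show ?thesis using that unfolding F_def by (simp add: algebra_simps)
    qed
    show "x * y \<in> F" if "x \<in> F" "y \<in> F" for x y
      using that unfolding F_def by (simp add: power_mult_distrib)
    show "inverse x \<in> F" if "x \<in> F" for x
      using that unfolding F_def by (simp add: power_inverse)
    show "card F * card F = card (UNIV::'a set)" using Fcard qQ q_def by simp
    show "f (l * x) = f x" if "l \<in> F" "l \<noteq> 0" for l x
    proof -
      have "l ^ (Q - 1) = 1" using that memF by blast
      then have "l ^ e = 1" unfolding e_eq by (simp add: power_mult)
      then show ?thesis unfolding fdef e_def[symmetric] by (simp add: power_mult_distrib)
    qed
  qed
  have ind: "induces_assoc_scheme f d \<longleftrightarrow> d = card (f ` (UNIV - {0}))" for d
    using plane.induces_iff[OF pl] .
  have img: "f ` (UNIV - {0}) = (\<lambda>z. field_trace p n z) ` {z::'a. z ^ N = 1}"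
  proof -
    have "f ` (UNIV - {0}) = (\<lambda>z. field_trace p n z) ` ((\<lambda>x::'a. x ^ e) ` (UNIV - {0}))"
      by (simp add: image_image fdef e_def)
    also have "(\<lambda>x::'a. x ^ e) ` (UNIV - {0}) = {z. z ^ N = 1}"
      using roots_eq(2)[of N] N1 Ndvd unfolding e_def q_def by simp
    finally show ?thesis .
  qed
  have trv: "field_trace p n z = of_nat (if z = 1 then N else 0) - of_nat (if z ^ r = 1 then r ^ (m - 1) else 0)"
    if "z ^ N = 1" for z :: 'a
    using trace_formula[OF rp m0 prim, of z] that unfolding field_trace_def n_def N_def by simp
  define a where "a = (of_nat n :: 'a)"
  define b where "b = - (of_nat (r ^ (m - 1)) :: 'a)"
  have Nn: "N = n + r ^ (m - 1)" unfolding Nr n_eq using r1 by (cases r) (auto simp: algebra_simps)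
  have v1: "field_trace p n 1 = a" using trv[of 1] unfolding a_def Nn by simp
  have zN: "z ^ N = 1" if "z ^ r = 1" for z :: 'a
    using that unfolding Nr by (simp add: power_mult)
  have vr: "field_trace p n z = b" if "z ^ r = 1" "z \<noteq> 1" for z :: 'a
    using trv[OF zN[OF that(1)]] that unfolding b_def by simp
  have v0: "field_trace p n z = 0" if "z ^ N = 1" "z ^ r \<noteq> 1" "z \<noteq> 1" for z :: 'a
    using trv[OF that(1)] that by simp
  have rdvd: "r dvd q - 1" using Ndvd Nr by (metis dvd_mult_left)
  have cr: "card {z::'a. z ^ r = 1} = r"
    using roots_eq(1)[of r] r1 rdvd unfolding q_def by simp
  obtain z1 :: 'a where z1: "z1 ^ r = 1" "z1 \<noteq> 1"
  proof -
    have "\<not> {z::'a. z ^ r = 1} \<subseteq> {1}"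
    proof
      assume "{z::'a. z ^ r = 1} \<subseteq> {1}"
      then have "card {z::'a. z ^ r = 1} \<le> card {1::'a}" by (intro card_mono) auto
      then show False using cr r1 by simp
    qed
    then show ?thesis using that by blast
  qed
  have z2ex: "\<exists>z2::'a. z2 ^ N = 1 \<and> z2 ^ r \<noteq> 1" if "m > 1"
  proof (rule ccontr)
    assume "\<not> (\<exists>z2::'a. z2 ^ N = 1 \<and> z2 ^ r \<noteq> 1)"
    then have "{z::'a. z ^ N = 1} \<subseteq> {z. z ^ r = 1}" by auto
    then have "card {z::'a. z ^ N = 1} \<le> r" using cr by (metis card_mono finite)
    moreover have "card {z::'a. z ^ N = 1} = N" using roots_eq(1)[of N] N1 Ndvd unfolding q_def by simp
    moreover have "r ^ (m - 1) > 1" using one_less_power[OF r1, of "m - 1"] that by simp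
    then have "N > r" unfolding Nr using r1 by simp
    ultimately show False by simp
  qed
  have V: "f ` (UNIV - {0}) = {a, b} \<union> (if m > 1 then {0} else {})"
  proof (intro equalityI subsetI)
    fix y assume "y \<in> f ` (UNIV - {0})"
    then obtain z :: 'a where z: "z ^ N = 1" "y = field_trace p n z" unfolding img by auto
    show "y \<in> {a, b} \<union> (if m > 1 then {0} else {})"
    proof (cases "z = 1")
      case True then show ?thesis using z v1 by simp
    next
      case False
      show ?thesis
      proof (cases "z ^ r = 1")
        case True then show ?thesis using z vr False by simp
      next
        case nr: False
        have "m \<noteq> 1" using z nr unfolding N_def by auto
        then show ?thesis using z v0 nr False m0 by simp
      qed
    qed
  next
    fix y assume y: "y \<in> {a, b} \<union> (if m > 1 then {0} else {})"
    have "a \<in> f ` (UNIV - {0})" unfolding img using v1 by (metis (mono_tags, lifting) image_eqI mem_Collect_eq power_one)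
    moreover have "b \<in> f ` (UNIV - {0})" unfolding img using vr[OF z1] zN[OF z1(1)] by (metis (mono_tags, lifting) image_eqI mem_Collect_eq)
    moreover have "0 \<in> f ` (UNIV - {0})" if m1: "m > 1"
    proof -
      obtain z2 :: 'a where z2: "z2 ^ N = 1" "z2 ^ r \<noteq> 1" using z2ex[OF m1] by blast
      then have "z2 \<noteq> 1" by auto
      then have "field_trace p n z2 = 0" using v0 z2 by blast
      then show ?thesis unfolding img using z2 by (metis (mono_tags, lifting) image_eqI mem_Collect_eq)
    qed
    ultimately show "y \<in> f ` (UNIV - {0})" using y by (auto split: if_splits)
  qed
  have ofz: "of_nat k = (0::'a) \<longleftrightarrow> p dvd k" for k
    using of_nat_eq_0_iff_char_dvd[where 'a='a] CH by simp
  have npr: "\<not> p dvd r"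
  proof
    assume "p dvd r"
    then have "p dvd N" unfolding Nr by simp
    then have "is_unit p" using coprime_common_divisor[OF copN] by auto
    then show False using pp by simp
  qed
  have npr': "\<not> p dvd r ^ (m - 1)" using npr prime_dvd_power[OF pp] by blast
  have "of_nat (r ^ (m - 1)) \<noteq> (0::'a)" using ofz[of "r ^ (m - 1)"] npr' by blast
  then have b0: "b \<noteq> 0" unfolding b_def by (metis neg_equal_0_iff_equal)
  have ab: "a \<noteq> b"
  proof
    assume "a = b"
    then have "of_nat n + of_nat (r ^ (m - 1)) = (0::'a)" unfolding a_def b_def by simp
    then have "of_nat N = (0::'a)" unfolding Nn by simp
    then have "p dvd N" using ofz by blast
    then have "p dvd r" unfolding N_def using prime_dvd_power[OF pp] by blast
    then show False using npr by simp
  qed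
  have a0: "a = 0 \<longleftrightarrow> [r = 1] (mod p)"
  proof -
    have "a = 0 \<longleftrightarrow> p dvd n" unfolding a_def using ofz by simp
    also have "\<dots> \<longleftrightarrow> p dvd r - 1" unfolding n_eq using prime_dvd_mult_iff[OF pp] npr' by blast
    also have "\<dots> \<longleftrightarrow> [r = 1] (mod p)" using cong_altdef_nat[of 1 r p] r1 by simp
    finally show ?thesis .
  qed
  have card_val: "card (f ` (UNIV - {0})) = (if m > 1 \<and> \<not> [r = 1] (mod p) then 3 else 2)"
  proof (cases "m > 1")
    case True
    show ?thesis
    proof (cases "[r = 1] (mod p)")
      case True
      then have "a = 0" using a0 by simp
      then show ?thesis using V \<open>m > 1\<close> True b0 by auto
    next
      case False
      then have "a \<noteq> 0" using a0 by simp
      then show ?thesis using V \<open>m > 1\<close> False b0 ab by auto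
    qed
  next
    case False
    then show ?thesis using V ab by simp
  qed
  show ?thesis using ind[of 2] ind[of 3] card_val m0 by auto
qed

end
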